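(* Let $I\ge1$, let $u_0,\dots,u_{I-1}\ge 0$, $c_0,\dots,c_{I-1}\ge0$, $u_I,c_I\in\mathbb R$, $k_0,\dots,k_{I-1}>0$, and let $(S_I(t))_{t\ge0}$ be an arbitrary real-valued process. Set $X_I(t)=u_I+c_It-S_I(t)$, $L_I(t)=-\min(\inf_{s\le t}X_I(s),0)$, and recursively for $i=I-1,I-2,\dots,0$: $$Y_i(t)=u_i+c_it-k_iL_{i+1}(t),\qquad L_i(t)=-\min\Big(\inf_{s\le t}Y_i(s),0\Big)\ (i\ge1).$$ Let $\tau_0=\inf\{t\ge0:Y_0(t)<0\}$. Define $$U=\sum_{i=0}^{I}\frac{u_i}{k_i k_{i+1}\cdots k_{I-1}},\qquad C=\sum_{i=0}^{I}\frac{c_i}{k_ik_{i+1}\cdots k_{I-1}}$$ (the empty product for $i=I$ being $1$). Then $\tau_0=\inf\{t\ge0: U+Ct-S_I(t)<0\}$ pathwise; consequently for all $t>0$, $$P(\tau_0<t)=\Psi_I\Big(t;\ \tfrac{u_0}{k_0\cdots k_{I-1}}+\tfrac{u_1}{k_1\cdots k_{I-1}}+\dots+u_I,\ \tfrac{c_0}{k_0\cdots k_{I-1}}+\tfrac{c_1}{k_1\cdots k_{I-1}}+\dots+c_I\Big),$$ where $\Psi_I(t;u,c)=P(\inf\{s\ge0:u+cs-S_I(s)<0\}<t)$ is the finite-time ruin probability of the last subsidiary in the chain with initial reserve $u$ and premium rate $c$.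
   Context: Linear (hierarchical) chain of central branches $X_0,\dots,X_{I-1}$, each a deterministic drift $u_i+c_it$ in isolation; branch $i$ bails out branch $i+1$ by minimal regulation, paying proportional cost $k_i$ per unit of bail-out. $Y_i$ is the (unregulated) reserve of branch $i$ after its bail-out payments, $L_i$ its bail-out regulator, and the ruin of the network is the ruin time $\tau_0$ of the top branch $X_0$. *)

theory Defs
  imports "HOL-Probability.Probability"
begin

text \<open>Running infimum over [0,t] (in the extended reals, so that it is
always well defined for an arbitrary path).\<close>
definition run_inf :: "(real \<Rightarrow> ereal) \<Rightarrow> real \<Rightarrow> ereal" where
  "run_inf f t = (INF s\<in>{0..t}. f s)"

definition regulator :: "(real \<Rightarrow> ereal) \<Rightarrow> real \<Rightarrow> ereal" where
  "regulator f t = - min (run_inf f t) 0"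

text \<open>Ruin time inf{t >= 0 : f t < 0}, with inf of the empty set = infinity.\<close>
definition ruin_time :: "(real \<Rightarrow> ereal) \<Rightarrow> ereal" where
  "ruin_time f = (INF t\<in>{t. 0 \<le> t \<and> f t < 0}. ereal t)"

definition branch_Y :: "(nat \<Rightarrow> real) \<Rightarrow> (nat \<Rightarrow> real) \<Rightarrow> (nat \<Rightarrow> real) \<Rightarrow> nat
    \<Rightarrow> (real \<Rightarrow> ereal) \<Rightarrow> real \<Rightarrow> ereal" where
  "branch_Y u c k i Lnext t = ereal (u i + c i * t) - ereal (k i) * Lnext t"

text \<open>bail_L I u c k S m is the regulator L_{I-m} (for m <= I-1):
  L_I is the regulator of X_I(t) = u_I + c_I t - S(t), and
  L_i is the regulator of Y_i for 1 <= i < I.\<close>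
fun bail_L :: "nat \<Rightarrow> (nat \<Rightarrow> real) \<Rightarrow> (nat \<Rightarrow> real) \<Rightarrow> (nat \<Rightarrow> real)
    \<Rightarrow> (real \<Rightarrow> real) \<Rightarrow> nat \<Rightarrow> real \<Rightarrow> ereal" where
  "bail_L I u c k S 0 = regulator (\<lambda>t. ereal (u I + c I * t - S t))"
| "bail_L I u c k S (Suc m) =
     regulator (branch_Y u c k (I - Suc m) (bail_L I u c k S m))"

definition top_Y :: "nat \<Rightarrow> (nat \<Rightarrow> real) \<Rightarrow> (nat \<Rightarrow> real) \<Rightarrow> (nat \<Rightarrow> real)
    \<Rightarrow> (real \<Rightarrow> real) \<Rightarrow> real \<Rightarrow> ereal" where
  "top_Y I u c k S = branch_Y u c k 0 (bail_L I u c k S (I - 1))"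

definition finite_time_ruin_prob :: "'w measure \<Rightarrow> ('w \<Rightarrow> real \<Rightarrow> real)
    \<Rightarrow> real \<Rightarrow> real \<Rightarrow> real \<Rightarrow> real" where
  "finite_time_ruin_prob M S t u c =
     measure M {\<omega>\<in>space M. ruin_time (\<lambda>s. ereal (u + c * s - S \<omega> s)) < ereal t}"

end

theory Submission
  imports Defs
begin

fun Wm :: "nat \<Rightarrow> (nat \<Rightarrow> real) \<Rightarrow> (nat \<Rightarrow> real) \<Rightarrow> (nat \<Rightarrow> real) \<Rightarrow> (real \<Rightarrow> real) \<Rightarrow> nat \<Rightarrow> real \<Rightarrow> real" where
  "Wm I u c k S 0 s = u I + c I * s - S s"
| "Wm I u c k S (Suc m) s = u (I - Suc m) + c (I - Suc m) * s + k (I - Suc m) * Wm I u c k S m s"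

lemma reg_gt:
  assumes "(b::real) \<ge> 0"
  shows "(ereal b < regulator f t) \<longleftrightarrow> (\<exists>s\<in>{0..t}. f s < ereal (-b))"
proof -
  have "(ereal b < regulator f t) \<longleftrightarrow> run_inf f t < ereal (-b)"
    unfolding regulator_def using assms
    by (cases "run_inf f t") (auto simp: min_def ereal_uminus_less_reorder)
  also have "\<dots> \<longleftrightarrow> (\<exists>s\<in>{0..t}. f s < ereal (-b))"
    unfolding run_inf_def by (simp add: INF_less_iff)
  finally show ?thesis .
qed

lemma branch_pt:
  assumes "k i > 0"
  shows "branch_Y u c k i L t < ereal (-b) \<longleftrightarrow> ereal ((u i + c i * t + b) / k i) < L t"
proof (cases "L t")
  case (real l)
  have "u i + c i * t - k i * l < - b \<longleftrightarrow> (u i + c i * t + b) / k i < l"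
    using assms by (simp add: field_simps)
  then show ?thesis using real by (simp add: branch_Y_def)
next
  case PInf
  then show ?thesis using assms by (simp add: branch_Y_def)
next
  case MInf
  then show ?thesis using assms by (simp add: branch_Y_def)
qed

lemma L_char:
  assumes "m < I" "\<And>i. i < I \<Longrightarrow> u i \<ge> 0" "\<And>i. i < I \<Longrightarrow> c i \<ge> 0"
    "\<And>i. i < I \<Longrightarrow> k i > 0" "(b::real) \<ge> 0"
  shows "ereal b < bail_L I u c k S m t \<longleftrightarrow> (\<exists>s\<in>{0..t}. Wm I u c k S m s + b < 0)"
  using assms(1,5)
proof (induction m arbitrary: b t)
  case 0
  then show ?case by (simp add: reg_gt algebra_simps less_diff_eq)
next
  case (Suc m)
  define i where "i = I - Suc m"
  have i: "i < I" using Suc.prems i_def by simp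
  have kp: "k i > 0" "u i \<ge> 0" "c i \<ge> 0" using assms i by auto
  have "ereal b < bail_L I u c k S (Suc m) t \<longleftrightarrow>
      (\<exists>t'\<in>{0..t}. branch_Y u c k i (bail_L I u c k S m) t' < ereal (-b))"
    using Suc.prems by (simp add: reg_gt i_def)
  also have "\<dots> \<longleftrightarrow> (\<exists>t'\<in>{0..t}. ereal ((u i + c i * t' + b) / k i) < bail_L I u c k S m t')"
    using branch_pt[where k=k and i=i, OF kp(1)] by simp
  also have "\<dots> \<longleftrightarrow> (\<exists>t'\<in>{0..t}. \<exists>s\<in>{0..t'}. Wm I u c k S m s + (u i + c i * t' + b) / k i < 0)"
  proof -
    have "\<And>t'. t' \<in> {0..t} \<Longrightarrow> (u i + c i * t' + b) / k i \<ge> 0"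
      using kp Suc.prems by auto
    then show ?thesis using Suc.IH Suc.prems by (meson Suc_lessD)
  qed
  also have "\<dots> \<longleftrightarrow> (\<exists>s\<in>{0..t}. Wm I u c k S (Suc m) s + b < 0)"
  proof
    assume "\<exists>t'\<in>{0..t}. \<exists>s\<in>{0..t'}. Wm I u c k S m s + (u i + c i * t' + b) / k i < 0"
    then obtain t' s where ts: "t' \<in> {0..t}" "s \<in> {0..t'}"
      and h: "Wm I u c k S m s + (u i + c i * t' + b) / k i < 0" by blast
    have "k i * Wm I u c k S m s + (u i + c i * t' + b) < 0"
      using h kp by (simp add: field_simps)
    moreover have "c i * s \<le> c i * t'" using ts kp by (simp add: mult_left_mono)
    ultimately have "Wm I u c k S (Suc m) s + b < 0" by (simp add: i_def[symmetric])
    then show "\<exists>s\<in>{0..t}. Wm I u c k S (Suc m) s + b < 0" using ts by auto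
  next
    assume "\<exists>s\<in>{0..t}. Wm I u c k S (Suc m) s + b < 0"
    then obtain s where s: "s \<in> {0..t}" and h: "Wm I u c k S (Suc m) s + b < 0" by blast
    have "Wm I u c k S m s + (u i + c i * s + b) / k i < 0"
      using h kp by (simp add: field_simps i_def[symmetric])
    then show "\<exists>t'\<in>{0..t}. \<exists>s\<in>{0..t'}. Wm I u c k S m s + (u i + c i * t' + b) / k i < 0"
      using s by (intro bexI[of _ s]) auto
  qed
  finally show ?case .
qed

lemma Wm_closed:
  assumes "m \<le> I" "\<And>i. i < I \<Longrightarrow> k i > 0"
  shows "Wm I u c k S m s = (\<Prod>j\<in>{I-m..<I}. k j) *
     (\<Sum>i\<in>{I-m..I}. (u i + c i * s) / (\<Prod>j\<in>{i..<I}. k j)) - (\<Prod>j\<in>{I-m..<I}. k j) * S s"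
  using assms(1)
proof (induction m)
  case 0
  then show ?case by simp
next
  case (Suc m)
  define i where "i = I - Suc m"
  have i: "i < I" "I - m = Suc i" using Suc.prems i_def by auto
  have P: "(\<Prod>j\<in>{i..<I}. k j) = k i * (\<Prod>j\<in>{Suc i..<I}. k j)"
    using i by (simp add: prod.atLeast_Suc_lessThan)
  have Sm: "(\<Sum>l\<in>{i..I}. (u l + c l * s) / (\<Prod>j\<in>{l..<I}. k j)) =
     (u i + c i * s) / (\<Prod>j\<in>{i..<I}. k j) + (\<Sum>l\<in>{Suc i..I}. (u l + c l * s) / (\<Prod>j\<in>{l..<I}. k j))"
    using i by (simp add: sum.atLeast_Suc_atMost)
  have pos: "(\<Prod>j\<in>{i..<I}. k j) > 0" using assms(2) by (intro prod_pos) auto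
  have "Wm I u c k S (Suc m) s = u i + c i * s + k i * Wm I u c k S m s"
    by (simp add: i_def)
  also have "\<dots> = u i + c i * s + k i * ((\<Prod>j\<in>{Suc i..<I}. k j) *
     (\<Sum>l\<in>{Suc i..I}. (u l + c l * s) / (\<Prod>j\<in>{l..<I}. k j)) - (\<Prod>j\<in>{Suc i..<I}. k j) * S s)"
    using Suc by (simp add: i(2))
  also have "\<dots> = (\<Prod>j\<in>{i..<I}. k j) *
     (\<Sum>l\<in>{i..I}. (u l + c l * s) / (\<Prod>j\<in>{l..<I}. k j)) - (\<Prod>j\<in>{i..<I}. k j) * S s"
  proof -
    have p1: "(\<Prod>j\<in>{Suc i..<I}. k j) > 0" using assms(2) by (intro prod_pos) auto
    have p2: "k i > 0" using assms(2) i by auto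
    have e: "(k i * (\<Prod>j\<in>{Suc i..<I}. k j)) * ((u i + c i * s) / (k i * (\<Prod>j\<in>{Suc i..<I}. k j))) = u i + c i * s"
      using p1 p2 by (metis mult_pos_pos nonzero_mult_div_cancel_left times_divide_eq_right order_less_irrefl)
    show ?thesis unfolding Sm P using e by (simp only: distrib_left right_diff_distrib mult.assoc)
  qed
  finally show ?case by (simp add: i_def)
qed

lemma ruin_eq:
  assumes "\<And>t. t \<ge> 0 \<Longrightarrow> f t < 0 \<Longrightarrow> (\<exists>s\<in>{0..t}. g s < 0)"
    "\<And>t. t \<ge> 0 \<Longrightarrow> g t < 0 \<Longrightarrow> f t < 0"
  shows "ruin_time f = ruin_time g"
  unfolding ruin_time_def
proof (rule antisym)
  show "(INF t\<in>{t. 0 \<le> t \<and> f t < 0}. ereal t) \<le> (INF t\<in>{t. 0 \<le> t \<and> g t < 0}. ereal t)"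
    by (rule INF_superset_mono) (use assms in auto)
next
  show "(INF t\<in>{t. 0 \<le> t \<and> g t < 0}. ereal t) \<le> (INF t\<in>{t. 0 \<le> t \<and> f t < 0}. ereal t)"
  proof (rule INF_greatest)
    fix t assume "t \<in> {t. 0 \<le> t \<and> f t < 0}"
    then obtain s where s: "s \<in> {0..t}" "g s < 0" using assms(1)[of t] by blast
    then have "(INF t\<in>{t. 0 \<le> t \<and> g t < 0}. ereal t) \<le> ereal s" by (intro INF_lower) auto
    also have "\<dots> \<le> ereal t" using s by auto
    finally show "(INF t\<in>{t. 0 \<le> t \<and> g t < 0}. ereal t) \<le> ereal t" .
  qed
qed

lemma top_char:
  assumes "I \<ge> 1" "\<And>i. i < I \<Longrightarrow> u i \<ge> 0" "\<And>i. i < I \<Longrightarrow> c i \<ge> 0"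
    "\<And>i. i < I \<Longrightarrow> k i > 0" "t \<ge> 0"
  shows "(top_Y I u c k S t < 0 \<longrightarrow> (\<exists>s\<in>{0..t}. Wm I u c k S I s < 0))
    \<and> (Wm I u c k S I t < 0 \<longrightarrow> top_Y I u c k S t < 0)"
proof -
  have kp: "k 0 > 0" "u 0 \<ge> 0" "c 0 \<ge> 0" using assms by auto
  have WI: "Wm I u c k S I s = u 0 + c 0 * s + k 0 * Wm I u c k S (I - 1) s" for s
    using assms(1) by (cases I) auto
  have "top_Y I u c k S t < 0 \<longleftrightarrow> (\<exists>s\<in>{0..t}. Wm I u c k S (I - 1) s + (u 0 + c 0 * t + 0) / k 0 < 0)"
  proof -
  have "top_Y I u c k S t < 0 \<longleftrightarrow> branch_Y u c k 0 (bail_L I u c k S (I - 1)) t < ereal (-0)"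
    by (simp add: top_Y_def zero_ereal_def)
  also have "\<dots> \<longleftrightarrow> ereal ((u 0 + c 0 * t + 0) / k 0) < bail_L I u c k S (I - 1) t"
    by (rule branch_pt[where k=k and i=0, OF kp(1)])
  also have "\<dots> \<longleftrightarrow> (\<exists>s\<in>{0..t}. Wm I u c k S (I - 1) s + (u 0 + c 0 * t + 0) / k 0 < 0)"
  proof -
    have nn: "0 \<le> (u 0 + c 0 * t + 0) / k 0" using kp assms(5) by simp
    have "I - 1 < I" using assms(1) by simp
    from L_char[OF this assms(2-4) nn] show ?thesis .
  qed
  finally show ?thesis .
  qed
  moreover have "\<exists>s\<in>{0..t}. Wm I u c k S I s < 0"
    if ex: "\<exists>s\<in>{0..t}. Wm I u c k S (I - 1) s + (u 0 + c 0 * t + 0) / k 0 < 0"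
  proof -
    obtain s where s: "s \<in> {0..t}" and h: "Wm I u c k S (I - 1) s + (u 0 + c 0 * t + 0) / k 0 < 0"
      using ex by blast
    have "k 0 * Wm I u c k S (I - 1) s + (u 0 + c 0 * t) < 0"
      using h kp by (simp add: field_simps)
    moreover have "c 0 * s \<le> c 0 * t" using s kp by (simp add: mult_left_mono)
    ultimately have "Wm I u c k S I s < 0" by (simp add: WI)
    then show ?thesis using s by auto
  qed
  moreover have "\<exists>s\<in>{0..t}. Wm I u c k S (I - 1) s + (u 0 + c 0 * t + 0) / k 0 < 0"
    if "Wm I u c k S I t < 0"
  proof -
    have "Wm I u c k S (I - 1) t + (u 0 + c 0 * t + 0) / k 0 < 0"
      using that kp by (simp add: WI field_simps)
    then show ?thesis using assms(5) by (intro bexI[of _ t]) auto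
  qed
  ultimately show ?thesis by blast
qed

theorem mainTheorem3:
  fixes I :: nat and u c k :: "nat \<Rightarrow> real"
    and M :: "'w measure" and S :: "'w \<Rightarrow> real \<Rightarrow> real"
  assumes "I \<ge> 1"
    and "\<And>i. i < I \<Longrightarrow> u i \<ge> 0"
    and "\<And>i. i < I \<Longrightarrow> c i \<ge> 0"
    and "\<And>i. i < I \<Longrightarrow> k i > 0"
    and "prob_space M"
    and "\<And>s. (\<lambda>\<omega>. S \<omega> s) \<in> borel_measurable M"
  defines "U \<equiv> (\<Sum>i\<le>I. u i / (\<Prod>j\<in>{i..<I}. k j))"
    and "C \<equiv> (\<Sum>i\<le>I. c i / (\<Prod>j\<in>{i..<I}. k j))"
  shows "(\<forall>\<omega>. ruin_time (top_Y I u c k (S \<omega>))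
                = ruin_time (\<lambda>t. ereal (U + C * t - S \<omega> t)))
       \<and> (\<forall>t>0. measure M {\<omega>\<in>space M. ruin_time (top_Y I u c k (S \<omega>)) < ereal t}
                = finite_time_ruin_prob M S t U C)"
proof -
  define P0 where "P0 = (\<Prod>j\<in>{0..<I}. k j)"
  have P0: "P0 > 0" unfolding P0_def using assms(4) by (intro prod_pos) auto
  have UC: "U + C * s = (\<Sum>i\<in>{0..I}. (u i + c i * s) / (\<Prod>j\<in>{i..<I}. k j))" for s
    unfolding U_def C_def atLeast0AtMost
    by (simp add: sum_distrib_right add_divide_distrib sum.distrib)
  have W: "Wm I u c k (S \<omega>) I s < 0 \<longleftrightarrow> U + C * s - S \<omega> s < 0" for \<omega> s
  proof -
    have "Wm I u c k (S \<omega>) I s = P0 * (U + C * s - S \<omega> s)"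
      using Wm_closed[of I I k u c "S \<omega>" s] assms(4) unfolding P0_def UC
      by (simp add: right_diff_distrib)
    then show ?thesis using P0 by (simp add: mult_less_0_iff)
  qed
  have path: "ruin_time (top_Y I u c k (S \<omega>)) = ruin_time (\<lambda>t. ereal (U + C * t - S \<omega> t))" for \<omega>
  proof (rule ruin_eq)
    fix t :: real assume t: "t \<ge> 0"
    note tc = top_char[where S="S \<omega>" and u=u and c=c and k=k, OF assms(1) assms(2) assms(3) assms(4) t]
    show "\<exists>s\<in>{0..t}. ereal (U + C * s - S \<omega> s) < 0" if "top_Y I u c k (S \<omega>) t < 0"
      using tc that W by auto
    show "top_Y I u c k (S \<omega>) t < 0" if "ereal (U + C * t - S \<omega> t) < 0"
      using tc that W by auto
  qed
  show ?thesis
    using path unfolding finite_time_ruin_prob_def by simp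
qed

end
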